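(* In the line network model (see context), fix $t\ge1$ and view $R_t:=\rho_{\ell+1}(t)$ as a function $g(z_{1,1},\dots,z_{1,\ell},\dots,z_{t,1},\dots,z_{t,\ell})$ of the link states $z_{s,j}\in\{0,1\}$, $1\le s\le t$, $1\le j\le\ell$. Then $g$ is $1$-Lipschitz in each coordinate: changing the value of a single $z_{s,j}$ (all others fixed) changes the value of $g$ by at most $1$.
   Context: Line network model. Fix integers $\ell\ge1$, $n\ge1$. Given link states $z_{t,i}\in\{0,1\}$ ($1$ = link $i$ ON at step $t$), the rank $\rho_i(t)$ of node $N^{(i)}$ after $t$ steps satisfies $\rho_1(t)=n$, $\rho_i(0)=0$ for $2\le i\le\ell+1$, and $\rho_{i+1}(t)=\rho_{i+1}(t-1)+z_{t,i}\mathbf 1\{\rho_i(t-1)>\rho_{i+1}(t-1)\}$ for $t\ge1$, $1\le i\le\ell$. $R_t=\rho_{\ell+1}(t)$ is the number of innovative (linearly independent) packets received at the destination $N^{(\ell+1)}$ after $t$ steps. *)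

theory Defs
  imports Main
begin

text \<open>Line network: nodes 1..l+1, links 1..l. z t i = True iff link i is ON at step t.
  rho l n z t i is the rank of node i after t steps.\<close>
fun rho :: "nat \<Rightarrow> nat \<Rightarrow> (nat \<Rightarrow> nat \<Rightarrow> bool) \<Rightarrow> nat \<Rightarrow> nat \<Rightarrow> nat" where
  "rho l n z 0 i = (if i = 1 then n else 0)"
| "rho l n z (Suc t) i =
     (if i = 1 then n
      else if 2 \<le> i \<and> i \<le> l + 1 then
        rho l n z t i + (if z (Suc t) (i - 1) \<and> rho l n z t (i - 1) > rho l n z t i then 1 else 0)
      else 0)"

definition R :: "nat \<Rightarrow> nat \<Rightarrow> (nat \<Rightarrow> nat \<Rightarrow> bool) \<Rightarrow> nat \<Rightarrow> nat" where
  "R l n z t = rho l n z t (l + 1)"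

end

theory Submission
  imports Defs
begin

lemma rho_one: "rho l n z t 1 = n"
  by (cases t) auto

lemma rho_mono: "1 \<le> i \<Longrightarrow> i \<le> l + 1 \<Longrightarrow> rho l n z t i \<le> rho l n z (Suc t) i"
  using rho_one[of l n z t] by (cases "i = 1") auto

lemma rho_ord: "1 \<le> i \<Longrightarrow> i \<le> l \<Longrightarrow> rho l n z t (Suc i) \<le> rho l n z t i"
proof (induction t arbitrary: i)
  case 0 then show ?case by simp
next
  case (Suc t)
  have "rho l n z (Suc t) (Suc i) \<le> rho l n z t i"
    using Suc.IH[of i] Suc.prems by auto
  also have "\<dots> \<le> rho l n z (Suc t) i" using rho_mono[of i l n z t] Suc.prems by simp
  finally show ?case .
qed

lemma rho_lip:
  assumes "\<And>a b. a \<noteq> s \<Longrightarrow> z' a b \<Longrightarrow> z a b"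
  shows "rho l n z' t i \<le> rho l n z t i + (if s \<le> t then 1 else 0)"
proof (induction t arbitrary: i)
  case 0 then show ?case by simp
next
  case (Suc t)
  show ?case
  proof (cases "2 \<le> i \<and> i \<le> l + 1")
    case False then show ?thesis by auto
  next
    case True
    obtain k where k: "i = Suc (Suc k)" using True by (metis add_2_eq_Suc le_Suc_ex)
    have o1: "rho l n z' t i \<le> rho l n z' t (i - 1)" using rho_ord[of "i - 1" l n z' t] True k by simp
    have o2: "rho l n z t i \<le> rho l n z t (i - 1)" using rho_ord[of "i - 1" l n z t] True k by simp
    have h1: "rho l n z' t i \<le> rho l n z t i + (if s \<le> t then 1 else 0)" by (rule Suc.IH)
    have h2: "rho l n z' t (i - 1) \<le> rho l n z t (i - 1) + (if s \<le> t then 1 else 0)" by (rule Suc.IH)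
    have h3: "Suc t \<noteq> s \<Longrightarrow> z' (Suc t) (i - 1) \<Longrightarrow> z (Suc t) (i - 1)" using assms by blast
    have e1: "rho l n z' (Suc t) i = rho l n z' t i + (if z' (Suc t) (i - 1) \<and> rho l n z' t (i - 1) > rho l n z' t i then 1 else 0)"
      using True by simp
    have e2: "rho l n z (Suc t) i = rho l n z t i + (if z (Suc t) (i - 1) \<and> rho l n z t (i - 1) > rho l n z t i then 1 else 0)"
      using True by simp
    show ?thesis unfolding e1 e2 using o1 o2 h1 h2 h3
      by (auto split: if_splits)
  qed
qed

theorem mainTheorem6:
  fixes l n t s j :: nat and z :: "nat \<Rightarrow> nat \<Rightarrow> bool" and b :: bool
  assumes "l \<ge> 1" "n \<ge> 1" "t \<ge> 1"
    and "1 \<le> s" "s \<le> t" "1 \<le> j" "j \<le> l"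
  shows "\<bar>int (R l n z t) - int (R l n (z(s := (z s)(j := b))) t)\<bar> \<le> 1"
proof -
  let ?z' = "z(s := (z s)(j := b))"
  have a: "rho l n ?z' t (l+1) \<le> rho l n z t (l+1) + 1"
    using rho_lip[of s ?z' z l n t "l+1"] assms by auto
  have c: "rho l n z t (l+1) \<le> rho l n ?z' t (l+1) + 1"
    using rho_lip[of s z ?z' l n t "l+1"] assms by auto
  show ?thesis using a c unfolding R_def by linarith
qed

end
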